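(* Let $E$ be a graph with finitely many vertices and $K$ a field of characteristic $0$. Assume $E$ contains a sink $w$ and an edge $f$ with $r(f)=w$. Then $1+2f^*$ and $1+2f$ are units of $L_K(E)$ and $\langle 1+2f^*,\,1+2f\rangle$ is a non-cyclic free subgroup of $L_K(E)^\times$.
   Context: A graph $E=(E^0,E^1,r,s)$; the Leavitt path algebra $L_K(E)$ is the free associative $K$-algebra generated by $E^0\cup E^1\cup\{e^*:e\in E^1\}$ subject to: $vv'=\delta_{v,v'}v$; $s(e)e=er(e)=e$; $r(e)e^*=e^*s(e)=e^*$; $e^*f=\delta_{e,f}r(e)$; $v=\sum_{s(e)=v}ee^*$ for every vertex $v$ emitting a finite nonzero number of edges. With $E^0$ finite, $L_K(E)$ is unital with $1=\sum_{v\in E^0}v$. A sink is a vertex emitting no edges. *)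

theory Defs
  imports "HOL-Algebra.Algebra"
begin

definition fa_carrier :: "('g list \<Rightarrow> 'k::field) set" where
  "fa_carrier = {f. finite {w. f w \<noteq> 0}}"

definition fa_mult :: "('g list \<Rightarrow> 'k::field) \<Rightarrow> ('g list \<Rightarrow> 'k) \<Rightarrow> ('g list \<Rightarrow> 'k)" where
  "fa_mult f g = (\<lambda>w. \<Sum>i\<le>length w. f (take i w) * g (drop i w))"

definition free_alg :: "('g list \<Rightarrow> 'k::field) ring" where
  "free_alg = \<lparr>carrier = fa_carrier, Group.monoid.mult = fa_mult,
               one = (\<lambda>w. if w = [] then 1 else 0),
               ring.zero = (\<lambda>w. 0), ring.add = (\<lambda>f g w. f w + g w)\<rparr>"

definition fa_gen :: "'g \<Rightarrow> ('g list \<Rightarrow> 'k::field)" where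
  "fa_gen x = (\<lambda>w. if w = [x] then 1 else 0)"

text \<open>Generators: vertices, edges, ghost edges.\<close>
datatype ('v, 'e) lpa_gen = Vx 'v | Ed 'e | Gh 'e

definition graph :: "'v set \<Rightarrow> 'e set \<Rightarrow> ('e \<Rightarrow> 'v) \<Rightarrow> ('e \<Rightarrow> 'v) \<Rightarrow> bool" where
  "graph E0 E1 r s \<longleftrightarrow> (\<forall>e\<in>E1. r e \<in> E0 \<and> s e \<in> E0)"

definition sink :: "'v set \<Rightarrow> 'e set \<Rightarrow> ('e \<Rightarrow> 'v) \<Rightarrow> 'v \<Rightarrow> bool" where
  "sink E0 E1 s v \<longleftrightarrow> v \<in> E0 \<and> (\<forall>e\<in>E1. s e \<noteq> v)"

text \<open>Defining relations (as elements r, meaning r = 0) of L_K(E), realised as a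
  quotient of the unital free algebra. Since E0 is finite, we add the relation
  1 = sum of vertices, so that the quotient coincides with the (a priori
  non-unital) Leavitt path algebra, which is unital with this unit.\<close>
definition lpa_rels ::
  "'v set \<Rightarrow> 'e set \<Rightarrow> ('e \<Rightarrow> 'v) \<Rightarrow> ('e \<Rightarrow> 'v) \<Rightarrow> ((('v,'e) lpa_gen) list \<Rightarrow> 'k::field) set"
where
  "lpa_rels E0 E1 r s =
     {fa_gen (Vx v) \<otimes>\<^bsub>free_alg\<^esub> fa_gen (Vx v') \<ominus>\<^bsub>free_alg\<^esub>
        (if v = v' then fa_gen (Vx v) else \<zero>\<^bsub>free_alg\<^esub>) | v v'. v \<in> E0 \<and> v' \<in> E0}
   \<union> {fa_gen (Vx (s e)) \<otimes>\<^bsub>free_alg\<^esub> fa_gen (Ed e) \<ominus>\<^bsub>free_alg\<^esub> fa_gen (Ed e) | e. e \<in> E1}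
   \<union> {fa_gen (Ed e) \<otimes>\<^bsub>free_alg\<^esub> fa_gen (Vx (r e)) \<ominus>\<^bsub>free_alg\<^esub> fa_gen (Ed e) | e. e \<in> E1}
   \<union> {fa_gen (Vx (r e)) \<otimes>\<^bsub>free_alg\<^esub> fa_gen (Gh e) \<ominus>\<^bsub>free_alg\<^esub> fa_gen (Gh e) | e. e \<in> E1}
   \<union> {fa_gen (Gh e) \<otimes>\<^bsub>free_alg\<^esub> fa_gen (Vx (s e)) \<ominus>\<^bsub>free_alg\<^esub> fa_gen (Gh e) | e. e \<in> E1}
   \<union> {fa_gen (Gh e) \<otimes>\<^bsub>free_alg\<^esub> fa_gen (Ed e') \<ominus>\<^bsub>free_alg\<^esub>
        (if e = e' then fa_gen (Vx (r e)) else \<zero>\<^bsub>free_alg\<^esub>) | e e'. e \<in> E1 \<and> e' \<in> E1}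
   \<union> {fa_gen (Vx v) \<ominus>\<^bsub>free_alg\<^esub>
        finsum free_alg (\<lambda>e. fa_gen (Ed e) \<otimes>\<^bsub>free_alg\<^esub> fa_gen (Gh e)) {e \<in> E1. s e = v}
        | v. v \<in> E0 \<and> finite {e \<in> E1. s e = v} \<and> {e \<in> E1. s e = v} \<noteq> {}}
   \<union> {\<one>\<^bsub>free_alg\<^esub> \<ominus>\<^bsub>free_alg\<^esub> finsum free_alg (\<lambda>v. fa_gen (Vx v)) E0}"

definition lpa_ideal ::
  "'v set \<Rightarrow> 'e set \<Rightarrow> ('e \<Rightarrow> 'v) \<Rightarrow> ('e \<Rightarrow> 'v) \<Rightarrow> ((('v,'e) lpa_gen) list \<Rightarrow> 'k::field) set"
where "lpa_ideal E0 E1 r s = genideal free_alg (lpa_rels E0 E1 r s)"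

definition LPA ::
  "'v set \<Rightarrow> 'e set \<Rightarrow> ('e \<Rightarrow> 'v) \<Rightarrow> ('e \<Rightarrow> 'v) \<Rightarrow> ((('v,'e) lpa_gen) list \<Rightarrow> 'k::field) set ring"
where "LPA E0 E1 r s = free_alg Quot lpa_ideal E0 E1 r s"

definition lpa_cls ::
  "'v set \<Rightarrow> 'e set \<Rightarrow> ('e \<Rightarrow> 'v) \<Rightarrow> ('e \<Rightarrow> 'v) \<Rightarrow> ('v,'e) lpa_gen \<Rightarrow> ((('v,'e) lpa_gen) list \<Rightarrow> 'k::field) set"
where "lpa_cls E0 E1 r s x = lpa_ideal E0 E1 r s +>\<^bsub>free_alg\<^esub> fa_gen x"

text \<open>Words over S and their inverses: (True, x) means x, (False, x) means x^-1.\<close>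
definition word_eval :: "('a, 'b) monoid_scheme \<Rightarrow> (bool \<times> 'a) list \<Rightarrow> 'a" where
  "word_eval G w = foldr (\<lambda>(b, x) acc. (if b then x else inv\<^bsub>G\<^esub> x) \<otimes>\<^bsub>G\<^esub> acc) w \<one>\<^bsub>G\<^esub>"

definition reduced_word :: "(bool \<times> 'a) list \<Rightarrow> bool" where
  "reduced_word w \<longleftrightarrow>
     (\<forall>i. Suc i < length w \<longrightarrow> \<not> (snd (w ! i) = snd (w ! Suc i) \<and> fst (w ! i) \<noteq> fst (w ! Suc i)))"

definition free_basis :: "('a, 'b) monoid_scheme \<Rightarrow> 'a set \<Rightarrow> bool" where
  "free_basis G S \<longleftrightarrow> S \<subseteq> carrier G \<and> generate G S = carrier G \<and>
     (\<forall>w. w \<noteq> [] \<and> set (map snd w) \<subseteq> S \<and> reduced_word w \<longrightarrow> word_eval G w \<noteq> one G)"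

definition free_group :: "('a, 'b) monoid_scheme \<Rightarrow> bool" where
  "free_group G \<longleftrightarrow> group G \<and> (\<exists>S. free_basis G S)"

end

theory Submission
  imports Defs
begin


lemma fa_carrier_iff: "f \<in> carrier free_alg \<longleftrightarrow> finite {w. f w \<noteq> 0}"
  by (simp add: free_alg_def fa_carrier_def)

lemma fa_simps:
  "x \<otimes>\<^bsub>free_alg\<^esub> y = fa_mult x y"
  "x \<oplus>\<^bsub>free_alg\<^esub> y = (\<lambda>w. x w + y w)"
  "\<one>\<^bsub>free_alg\<^esub> = (\<lambda>w. if w = [] then 1 else 0)"
  "\<zero>\<^bsub>free_alg\<^esub> = (\<lambda>w. 0)"
  by (simp_all add: free_alg_def)

lemma fa_mult_supp:
  assumes "fa_mult f g w \<noteq> 0"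
  shows "w \<in> (\<lambda>(u,v). u @ v) ` ({u. f u \<noteq> 0} \<times> {v. g v \<noteq> 0})"
proof -
  from assms obtain i where "i \<le> length w" "f (take i w) * g (drop i w) \<noteq> 0"
    unfolding fa_mult_def by (meson sum.neutral atMost_iff)
  then show ?thesis by (auto intro!: image_eqI[where x="(take i w, drop i w)"])
qed

lemma fa_mult_closed:
  assumes "finite {w. f w \<noteq> 0}" "finite {w. g w \<noteq> 0}"
  shows "finite {w. fa_mult f g w \<noteq> (0::'k::field)}"
  by (rule finite_subset[OF _ finite_imageI[OF finite_cartesian_product[OF assms]]])
     (use fa_mult_supp in blast)

lemma fa_mult_assoc:
  "fa_mult (fa_mult f g) h w = fa_mult f (fa_mult g h) w"
proof -
  let ?n = "length w"
  have "fa_mult f (fa_mult g h) w =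
     (\<Sum>i\<le>?n. \<Sum>k\<le>?n - i. f (take i w) * (g (take k (drop i w)) * h (drop k (drop i w))))"
    by (simp add: fa_mult_def sum_distrib_left)
  also have "\<dots> = (\<Sum>(i,k)\<in>{(i,k). i + k \<le> ?n}. f (take i w) * (g (take k (drop i w)) * h (drop k (drop i w))))"
  proof -
    have e: "{(i,k). i + k \<le> ?n} = Sigma {..?n} (\<lambda>i. {..?n - i})" by auto
    show ?thesis unfolding e by (subst sum.Sigma) auto
  qed
  also have "\<dots> = (\<Sum>t\<le>?n. \<Sum>i\<le>t. f (take i w) * (g (take (t - i) (drop i w)) * h (drop (t - i) (drop i w))))"
    by (rule sum.triangle_reindex_eq)
  also have "\<dots> = fa_mult (fa_mult f g) h w"
    unfolding fa_mult_def sum_distrib_right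
  proof (rule sum.cong[OF refl])
    fix t assume t: "t \<in> {..?n}"
    hence lt: "length (take t w) = t" by auto
    show "(\<Sum>i\<le>t. f (take i w) * (g (take (t - i) (drop i w)) * h (drop (t - i) (drop i w)))) =
          (\<Sum>i\<le>length (take t w). f (take i (take t w)) * g (drop i (take t w)) * h (drop t w))"
      unfolding lt
    proof (rule sum.cong[OF refl])
      fix i assume "i \<in> {..t}"
      hence i: "i \<le> t" by auto
      have 1: "take i (take t w) = take i w" using i by (simp add: min_def)
      have 2: "drop i (take t w) = take (t - i) (drop i w)" by (simp add: drop_take)
      have 3: "drop (t - i) (drop i w) = drop t w" using i by simp
      show "f (take i w) * (g (take (t - i) (drop i w)) * h (drop (t - i) (drop i w))) =
            f (take i (take t w)) * g (drop i (take t w)) * h (drop t w)"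
        unfolding 1 2 3 by (simp add: mult.assoc)
    qed
  qed
  finally show ?thesis ..
qed



lemma fa_one_mult: "fa_mult (\<lambda>w. if w = [] then 1 else 0) g w = g w"
proof -
  have "fa_mult (\<lambda>w. if w = [] then 1 else 0) g w
        = (\<Sum>i\<le>length w. if i = 0 then g (drop i w) else 0)"
    unfolding fa_mult_def by (rule sum.cong) auto
  also have "\<dots> = g w" by (simp add: sum.delta)
  finally show ?thesis .
qed

lemma fa_mult_one: "fa_mult g (\<lambda>w. if w = [] then 1 else 0) w = g w"
proof -
  have "fa_mult g (\<lambda>w. if w = [] then 1 else 0) w
        = (\<Sum>i\<le>length w. if i = length w then g (take i w) else 0)"
    unfolding fa_mult_def by (rule sum.cong) auto
  also have "\<dots> = g w" by (simp add: sum.delta)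
  finally show ?thesis .
qed

lemma fa_ldistr: "fa_mult (\<lambda>w. x w + y w) z = (\<lambda>w. fa_mult x z w + fa_mult y z w)"
  by (auto simp: fa_mult_def algebra_simps sum.distrib)

lemma fa_rdistr: "fa_mult z (\<lambda>w. x w + y w) = (\<lambda>w. fa_mult z x w + fa_mult z y w)"
  by (auto simp: fa_mult_def algebra_simps sum.distrib)

lemma fa_add_closed: "finite {w. x w \<noteq> 0} \<Longrightarrow> finite {w. y w \<noteq> 0} \<Longrightarrow> finite {w. x w + y w \<noteq> (0::'a::field)}"
  by (rule finite_subset[of _ "{w. x w \<noteq> 0} \<union> {w. y w \<noteq> 0}"]) auto

lemma fa_abelian: "abelian_group (free_alg :: ('g list \<Rightarrow> 'k::field) ring)"
proof (rule abelian_groupI, goal_cases)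
  case (6 x)
  then show ?case
    by (intro bexI[where x="\<lambda>w. - x w"]) (auto simp: fa_simps fa_carrier_iff)
qed (auto simp: fa_simps fa_carrier_iff fa_add_closed algebra_simps)

lemma fa_monoid: "monoid (free_alg :: ('g list \<Rightarrow> 'k::field) ring)"
  by (rule monoidI)
     (auto simp: fa_simps fa_carrier_iff fa_mult_closed fa_mult_assoc fa_one_mult fa_mult_one)

lemma fa_ring: "ring (free_alg :: ('g list \<Rightarrow> 'k::field) ring)"
  by (rule ringI[OF fa_abelian fa_monoid]) (simp_all add: fa_simps fa_ldistr fa_rdistr)

lemma fa_uminus: "x \<in> carrier free_alg \<Longrightarrow> \<ominus>\<^bsub>free_alg\<^esub> x = (\<lambda>w. - (x::'g list \<Rightarrow> 'k::field) w)"
  by (rule abelian_group.minus_equality[OF fa_abelian]) (auto simp: fa_simps fa_carrier_iff)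

lemma fa_minus: "x \<in> carrier free_alg \<Longrightarrow> y \<in> carrier free_alg \<Longrightarrow>
   x \<ominus>\<^bsub>free_alg\<^esub> y = (\<lambda>w. (x::'g list \<Rightarrow> 'k::field) w - y w)"
  by (simp add: a_minus_def fa_uminus fa_simps)

lemma fa_gen_carrier: "fa_gen x \<in> carrier free_alg"
  by (simp add: fa_carrier_iff fa_gen_def)

abbreviation FM where "FM x y \<equiv> x \<otimes>\<^bsub>free_alg\<^esub> y"
abbreviation FA where "FA x y \<equiv> x \<oplus>\<^bsub>free_alg\<^esub> y"
abbreviation FS where "FS x y \<equiv> x \<ominus>\<^bsub>free_alg\<^esub> y"
abbreviation FZ where "FZ \<equiv> \<zero>\<^bsub>free_alg\<^esub>"
abbreviation FO where "FO \<equiv> \<one>\<^bsub>free_alg\<^esub>"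



locale lparep =
  fixes E1 :: "'e set" and r s :: "'e \<Rightarrow> 'v" and wk :: 'v
begin

fun src :: "'e list \<Rightarrow> 'v" where
  "src [] = wk" | "src (e # p) = s e"

fun valid :: "'e list \<Rightarrow> bool" where
  "valid [] = True" | "valid (e # p) = (e \<in> E1 \<and> r e = src p \<and> valid p)"

fun gact :: "('v,'e) lpa_gen \<Rightarrow> 'e list \<Rightarrow> 'e list option" where
  "gact (Vx v) p = (if src p = v then Some p else None)"
| "gact (Ed e) p = (if e \<in> E1 \<and> r e = src p then Some (e # p) else None)"
| "gact (Gh e) [] = None"
| "gact (Gh e) (e' # p) = (if e' = e then Some p else None)"

fun wact :: "('v,'e) lpa_gen list \<Rightarrow> 'e list \<Rightarrow> 'e list option" where
  "wact [] p = Some p"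
| "wact (g # u) p = Option.bind (wact u p) (gact g)"

lemma wact_append: "wact (u @ v) p = Option.bind (wact v p) (wact u)"
  by (induction u) (auto simp: bind_assoc)

lemma gact_valid: "valid p \<Longrightarrow> gact g p = Some q \<Longrightarrow> valid q"
  by (cases "(g,p)" rule: gact.cases) (auto split: if_splits)

lemma wact_valid: "valid p \<Longrightarrow> wact u p = Some q \<Longrightarrow> valid q"
  by (induction u arbitrary: q) (auto simp: gact_valid bind_eq_Some_conv)

definition C :: "(('v,'e) lpa_gen list \<Rightarrow> 'k::field) \<Rightarrow> 'e list \<Rightarrow> 'e list \<Rightarrow> 'k" where
  "C x p q = (\<Sum>u\<in>{u. x u \<noteq> 0}. x u * of_bool (wact u p = Some q))"

lemma C_superset:
  assumes "finite T" "{u. x u \<noteq> 0} \<subseteq> T"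
  shows "C x p q = (\<Sum>u\<in>T. x u * of_bool (wact u p = Some q))"
  unfolding C_def by (rule sum.mono_neutral_left) (use assms in auto)

lemma C_add:
  assumes "finite {u. x u \<noteq> 0}" "finite {u. y u \<noteq> 0}"
  shows "C (\<lambda>u. x u + y u) p q = C x p q + C y p q"
proof -
  let ?T = "{u. x u \<noteq> 0} \<union> {u. y u \<noteq> 0}"
  have "C (\<lambda>u. x u + y u) p q = (\<Sum>u\<in>?T. (x u + y u) * of_bool (wact u p = Some q))"
    by (rule C_superset) (use assms in auto)
  also have "\<dots> = (\<Sum>u\<in>?T. x u * of_bool (wact u p = Some q)) + (\<Sum>u\<in>?T. y u * of_bool (wact u p = Some q))"
    by (simp add: distrib_right sum.distrib)
  also have "\<dots> = C x p q + C y p q"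
    by (subst (1 2) C_superset[where T="?T"]) (use assms in auto)
  finally show ?thesis .
qed

lemma C_neg: "C (\<lambda>u. - x u) p q = - C x p q"
  by (simp add: C_def sum_negf)

lemma C_zero: "C (\<lambda>u. 0) p q = 0"
  by (simp add: C_def)

lemma C_one: "C (\<lambda>u. if u = [] then 1 else 0) p q = of_bool (p = q)"
proof -
  have "{u. (if u = [] then 1 else (0::'k::field)) \<noteq> 0} = {[]}" by auto
  then show ?thesis by (simp add: C_def)
qed

lemma C_gen: "C (fa_gen g) p q = of_bool (gact g p = Some q)"
proof -
  have "{u. fa_gen g u \<noteq> (0::'k::field)} = {[g]}" by (auto simp: fa_gen_def)
  then show ?thesis by (simp add: C_def fa_gen_def)
qed

lemma fa_mult_splits:
  assumes "finite {u. x u \<noteq> 0}" "finite {u. y u \<noteq> 0}"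
  shows "fa_mult x y z = (\<Sum>(u,v)\<in>({u. x u \<noteq> 0} \<times> {v. y v \<noteq> 0}) \<inter> {(u,v). u @ v = z}. x u * y v)"
proof -
  have inj: "inj_on (\<lambda>i. (take i z, drop i z)) {..length z}"
  proof (rule inj_onI)
    fix i j assume "i \<in> {..length z}" "j \<in> {..length z}" "(take i z, drop i z) = (take j z, drop j z)"
    then have "length z - i = length z - j" "i \<le> length z" "j \<le> length z"
      by (metis length_drop prod.inject, auto)
    then show "i = j" by linarith
  qed
  have im: "(\<lambda>i. (take i z, drop i z)) ` {..length z} = {(u,v). u @ v = z}"
  proof -
    have "uv \<in> (\<lambda>i. (take i z, drop i z)) ` {..length z}" if "uv \<in> {(u,v). u @ v = z}" for uv
    proof -
      from that obtain u v where uv: "uv = (u,v)" "u @ v = z" by auto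
      then have "uv = (take (length u) z, drop (length u) z)" "length u \<in> {..length z}" by auto
      then show ?thesis by blast
    qed
    then show ?thesis by auto
  qed
  have fin: "finite {(u,v). u @ v = z}"
    using im by (metis finite_atMost finite_imageI)
  have "fa_mult x y z = (\<Sum>(u,v)\<in>{(u,v). u @ v = z}. x u * y v)"
    unfolding fa_mult_def im[symmetric] by (subst sum.reindex[OF inj]) simp
  also have "\<dots> = (\<Sum>(u,v)\<in>({u. x u \<noteq> 0} \<times> {v. y v \<noteq> 0}) \<inter> {(u,v). u @ v = z}. x u * y v)"
    by (rule sum.mono_neutral_right) (use fin in auto)
  finally show ?thesis .
qed

end

context lparep begin

lemma ind_append:
  assumes "finite S" "\<And>m. wact v p = Some m \<Longrightarrow> m \<in> S"
  shows "(\<Sum>m\<in>S. of_bool (wact v p = Some m) * of_bool (wact u m = Some q)) =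
         (of_bool (wact (u @ v) p = Some q) :: 'k::field)"
proof (cases "wact v p")
  case None
  then show ?thesis by (simp add: wact_append)
next
  case (Some m0)
  then have "m0 \<in> S" using assms by auto
  then have "(\<Sum>m\<in>S. of_bool (wact v p = Some m) * of_bool (wact u m = Some q)) =
        (\<Sum>m\<in>S. if m = m0 then (of_bool (wact u m0 = Some q) :: 'k) else 0)"
    using Some by (intro sum.cong) auto
  also have "\<dots> = of_bool (wact u m0 = Some q)" using \<open>m0 \<in> S\<close> assms(1) by simp
  finally show ?thesis using Some by (simp add: wact_append)
qed

lemma C_mult:
  fixes x y :: "('v,'e) lpa_gen list \<Rightarrow> 'k::field"
  assumes fx: "finite {u. x u \<noteq> 0}" and fy: "finite {u. y u \<noteq> 0}" and fS: "finite S"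
    and hS: "\<And>u m. y u \<noteq> 0 \<Longrightarrow> wact u p = Some m \<Longrightarrow> m \<in> S"
  shows "C (fa_mult x y) p q = (\<Sum>m\<in>S. C x m q * C y p m)"
proof -
  define Sx where "Sx = {u. x u \<noteq> 0}"
  define Sy where "Sy = {u. y u \<noteq> 0}"
  define P where "P = Sx \<times> Sy"
  define cat where "cat = (\<lambda>(u::('v,'e) lpa_gen list, v). u @ v)"
  define W where "W = cat ` P"
  have fP: "finite P" using fx fy by (simp add: P_def Sx_def Sy_def)
  have fW: "finite W" using fP by (simp add: W_def)
  let ?ind = "\<lambda>u. of_bool (wact u p = Some q) :: 'k"
  have "C (fa_mult x y) p q = (\<Sum>z\<in>W. fa_mult x y z * ?ind z)"
  proof (rule C_superset[OF fW])
    show "{u. fa_mult x y u \<noteq> 0} \<subseteq> W"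
      using fa_mult_supp[of x y] by (auto simp: W_def cat_def P_def Sx_def Sy_def)
  qed
  also have "\<dots> = (\<Sum>z\<in>W. \<Sum>uv\<in>{uv\<in>P. cat uv = z}. (case uv of (u,v) \<Rightarrow> x u * y v * ?ind (u @ v)))"
  proof (rule sum.cong[OF refl])
    fix z assume "z \<in> W"
    have e: "P \<inter> {(u,v). u @ v = z} = {uv\<in>P. cat uv = z}" by (auto simp: cat_def)
    show "fa_mult x y z * ?ind z = (\<Sum>uv\<in>{uv\<in>P. cat uv = z}. (case uv of (u,v) \<Rightarrow> x u * y v * ?ind (u @ v)))"
      unfolding fa_mult_splits[OF fx fy] P_def[symmetric] Sx_def[symmetric] Sy_def[symmetric] e
        sum_distrib_right
      by (rule sum.cong) (auto simp: cat_def)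
  qed
  also have "\<dots> = (\<Sum>uv\<in>P. (case uv of (u,v) \<Rightarrow> x u * y v * ?ind (u @ v)))"
    by (rule sum.group[OF fP fW]) (simp add: W_def)
  also have "\<dots> = (\<Sum>u\<in>Sx. \<Sum>v\<in>Sy. x u * y v * ?ind (u @ v))"
    by (simp add: P_def sum.cartesian_product)
  also have "\<dots> = (\<Sum>u\<in>Sx. \<Sum>v\<in>Sy. \<Sum>m\<in>S. (x u * of_bool (wact u m = Some q)) * (y v * of_bool (wact v p = Some m)))"
  proof (intro sum.cong refl)
    fix u v assume "v \<in> Sy"
    then have "?ind (u @ v) = (\<Sum>m\<in>S. of_bool (wact v p = Some m) * of_bool (wact u m = Some q))"
      by (intro ind_append[symmetric] fS) (auto intro: hS simp: Sy_def)
    then show "x u * y v * ?ind (u @ v) = (\<Sum>m\<in>S. (x u * of_bool (wact u m = Some q)) * (y v * of_bool (wact v p = Some m)))"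
      by (simp add: sum_distrib_left mult_ac)
  qed
  also have "\<dots> = (\<Sum>m\<in>S. \<Sum>u\<in>Sx. \<Sum>v\<in>Sy. (x u * of_bool (wact u m = Some q)) * (y v * of_bool (wact v p = Some m)))"
    by (simp add: sum.swap[of _ S Sy] sum.swap[of _ S Sx])
  also have "\<dots> = (\<Sum>m\<in>S. C x m q * C y p m)"
    by (simp add: C_def Sx_def Sy_def sum_product)
  finally show ?thesis .
qed

end


context lparep begin

lemma C_minus:
  fixes U V :: "('v,'e) lpa_gen list \<Rightarrow> 'k::field"
  assumes "U \<in> carrier free_alg" "V \<in> carrier free_alg"
  shows "C (FS U V) p q = C U p q - C V p q"
proof -
  have "C (FS U V) p q = C (\<lambda>u. U u + (\<lambda>u. - V u) u) p q"
    using assms by (simp add: fa_minus)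
  also have "\<dots> = C U p q + C (\<lambda>u. - V u) p q"
    by (rule C_add) (use assms in \<open>auto simp: fa_carrier_iff\<close>)
  finally show ?thesis by (simp add: C_neg)
qed

lemma C_add':
  fixes U V :: "('v,'e) lpa_gen list \<Rightarrow> 'k::field"
  assumes "U \<in> carrier free_alg" "V \<in> carrier free_alg"
  shows "C (FA U V) p q = C U p q + C V p q"
  using assms by (simp add: fa_simps C_add fa_carrier_iff)

lemma C_mult':
  fixes x y :: "('v,'e) lpa_gen list \<Rightarrow> 'k::field"
  assumes "x \<in> carrier free_alg" "y \<in> carrier free_alg" "finite S"
    and "\<And>u m. y u \<noteq> 0 \<Longrightarrow> wact u p = Some m \<Longrightarrow> m \<in> S"
  shows "C (FM x y) p q = (\<Sum>m\<in>S. C x m q * C y p m)"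
  using assms by (simp add: fa_simps fa_carrier_iff C_mult)

lemma C_gen2:
  "C (FM (fa_gen g) (fa_gen h)) p q =
   (case gact h p of None \<Rightarrow> 0 | Some m \<Rightarrow> (of_bool (gact g m = Some q) :: 'k::field))"
proof -
  have "C (FM (fa_gen g) (fa_gen h)) p q =
        (\<Sum>m\<in>set_option (gact h p). C (fa_gen g) m q * (C (fa_gen h) p m :: 'k))"
    apply (rule C_mult')
       apply (rule fa_gen_carrier)+
     apply simp
    apply (auto simp: fa_gen_def split: if_splits)
    done
  then show ?thesis by (cases "gact h p") (simp_all add: C_gen)
qed

lemma C_finsum:
  fixes F :: "'a \<Rightarrow> ('v,'e) lpa_gen list \<Rightarrow> 'k::field"
  assumes "finite A" "F ` A \<subseteq> carrier free_alg"
  shows "C (finsum free_alg F A) p q = (\<Sum>a\<in>A. C (F a) p q)"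
  using assms
proof (induction A rule: finite_induct)
  case empty
  interpret F: ring "free_alg :: (('v,'e) lpa_gen list \<Rightarrow> 'k) ring" by (rule fa_ring)
  show ?case by (simp add: fa_simps C_zero)
next
  case (insert a A)
  interpret F: ring "free_alg :: (('v,'e) lpa_gen list \<Rightarrow> 'k) ring" by (rule fa_ring)
  have Fc: "F \<in> A \<rightarrow> carrier free_alg" "F a \<in> carrier free_alg" using insert by auto
  have "finsum free_alg F (insert a A) = FA (F a) (finsum free_alg F A)"
    by (rule F.finsum_insert) (use insert Fc in auto)
  then show ?case using insert Fc by (simp add: C_add' F.finsum_closed)
qed

end

locale lpactx = lparep E1 r s wk for E0 :: "'v set" and E1 :: "'e set" and r s :: "'e \<Rightarrow> 'v" and wk :: 'v +
  assumes gr: "graph E0 E1 r s" and finE0: "finite E0" and wE0: "wk \<in> E0"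
    and sinkw: "\<And>e. e \<in> E1 \<Longrightarrow> s e \<noteq> wk"
begin

lemma src_valid: "valid p \<Longrightarrow> src p \<in> E0"
  by (cases p) (use gr wE0 in \<open>auto simp: graph_def\<close>)

definition K0 :: "(('v,'e) lpa_gen list \<Rightarrow> 'k::field) set" where
  "K0 = {x \<in> carrier free_alg. \<forall>p q. valid p \<longrightarrow> C x p q = 0}"

lemma K0_ideal: "ideal (K0 :: (('v,'e) lpa_gen list \<Rightarrow> 'k::field) set) free_alg"
proof (rule idealI[OF fa_ring])
  interpret F: ring "free_alg :: (('v,'e) lpa_gen list \<Rightarrow> 'k) ring" by (rule fa_ring)
  show "subgroup (K0 :: (('v,'e) lpa_gen list \<Rightarrow> 'k) set) (add_monoid free_alg)"
  proof (rule group.subgroupI[OF abelian_group.a_group[OF fa_abelian]], goal_cases)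
    case 1 then show ?case by (auto simp: K0_def)
  next
    case 2
    have "FZ \<in> (K0 :: (('v,'e) lpa_gen list \<Rightarrow> 'k) set)"
      by (auto simp: K0_def fa_simps C_zero fa_carrier_iff)
    then show ?case by auto
  next
    case (3 a)
    have e: "m_inv (add_monoid free_alg) a = a_inv free_alg a" by (simp add: a_inv_def)
    from 3 show ?case unfolding e by (auto simp: K0_def fa_uminus C_neg fa_carrier_iff)
  next
    case (4 a b)
    then show ?case by (auto simp: K0_def C_add')
  qed
next
  fix a x :: "('v,'e) lpa_gen list \<Rightarrow> 'k"
  assume a: "a \<in> K0" and x: "x \<in> carrier free_alg"
  show "FM x a \<in> K0"
  proof -
    have "C (FM x a) p q = 0" if "valid p" for p q
    proof -
      let ?S = "{m. \<exists>u. a u \<noteq> 0 \<and> wact u p = Some m}"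
      have fS: "finite ?S"
      proof -
        have "?S \<subseteq> (\<lambda>u. the (wact u p)) ` {u. a u \<noteq> 0}" by force
        then show ?thesis using a by (auto simp: K0_def fa_carrier_iff intro: finite_subset)
      qed
      have "C (FM x a) p q = (\<Sum>m\<in>?S. C x m q * C a p m)"
        by (rule C_mult') (use a x fS in \<open>auto simp: K0_def\<close>)
      also have "\<dots> = 0" using a that by (auto simp: K0_def intro!: sum.neutral)
      finally show ?thesis .
    qed
    then show ?thesis using a x by (auto simp: K0_def intro: monoid.m_closed[OF fa_monoid])
  qed
  show "FM a x \<in> K0"
  proof -
    have "C (FM a x) p q = 0" if "valid p" for p q
    proof -
      let ?S = "{m. \<exists>u. x u \<noteq> 0 \<and> wact u p = Some m}"
      have fS: "finite ?S"
      proof -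
        have "?S \<subseteq> (\<lambda>u. the (wact u p)) ` {u. x u \<noteq> 0}" by force
        then show ?thesis using x by (auto simp: fa_carrier_iff intro: finite_subset)
      qed
      have "C (FM a x) p q = (\<Sum>m\<in>?S. C a m q * C x p m)"
        by (rule C_mult') (use a x fS in \<open>auto simp: K0_def\<close>)
      also have "\<dots> = 0" using a that wact_valid by (auto simp: K0_def intro!: sum.neutral)
      finally show ?thesis .
    qed
    then show ?thesis using a x by (auto simp: K0_def intro: monoid.m_closed[OF fa_monoid])
  qed
qed

end


lemma FM_carrier: "a \<in> carrier free_alg \<Longrightarrow> b \<in> carrier free_alg \<Longrightarrow> FM a b \<in> carrier free_alg"
  by (rule monoid.m_closed[OF fa_monoid])

lemma FM_gen_carrier: "FM (fa_gen g) (fa_gen h) \<in> carrier free_alg"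
  by (intro FM_carrier fa_gen_carrier)

lemma FZ_carrier: "FZ \<in> carrier free_alg"
  by (simp add: fa_simps fa_carrier_iff)

lemma FO_carrier: "FO \<in> carrier free_alg"
  by (rule monoid.one_closed[OF fa_monoid])

lemma FS_carrier: "a \<in> carrier free_alg \<Longrightarrow> b \<in> carrier free_alg \<Longrightarrow> FS a b \<in> carrier free_alg"
  by (rule abelian_group.minus_closed[OF fa_abelian])

lemma finsum_carrier:
  fixes F :: "'a \<Rightarrow> ('g list \<Rightarrow> 'k::field)"
  assumes "F ` A \<subseteq> carrier free_alg"
  shows "finsum free_alg F A \<in> carrier free_alg"
proof -
  interpret F: ring "free_alg :: ('g list \<Rightarrow> 'k) ring" by (rule fa_ring)
  show ?thesis by (rule F.finsum_closed) (use assms in auto)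
qed

context lpactx begin

lemma K0I: "x \<in> carrier free_alg \<Longrightarrow> (\<And>p q. valid p \<Longrightarrow> C x p q = 0) \<Longrightarrow> x \<in> K0"
  by (auto simp: K0_def)

lemma C_FZ: "C FZ p q = 0"
  by (simp add: fa_simps C_zero)

lemma C_FO: "C FO p q = of_bool (p = q)"
  by (simp add: fa_simps C_one)

lemmas Csimps = lparep.gact.simps lparep.src.simps C_minus C_gen2 C_gen C_FZ C_FO FM_gen_carrier fa_gen_carrier FZ_carrier FO_carrier

lemma rel1a: "v \<noteq> v' \<Longrightarrow> FS (FM (fa_gen (Vx v)) (fa_gen (Vx v'))) FZ \<in> (K0 :: (_ \<Rightarrow> 'k::field) set)"
  by (auto intro!: K0I FS_carrier simp: Csimps)
lemma rel1b: "FS (FM (fa_gen (Vx v)) (fa_gen (Vx v))) (fa_gen (Vx v)) \<in> (K0 :: (_ \<Rightarrow> 'k::field) set)"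
  by (auto intro!: K0I FS_carrier simp: Csimps)

lemma rel2: "FS (FM (fa_gen (Vx (s e))) (fa_gen (Ed e))) (fa_gen (Ed e)) \<in> (K0 :: (_ \<Rightarrow> 'k::field) set)"
  by (auto intro!: K0I FS_carrier simp: Csimps)

lemma rel3: "FS (FM (fa_gen (Ed e)) (fa_gen (Vx (r e)))) (fa_gen (Ed e)) \<in> (K0 :: (_ \<Rightarrow> 'k::field) set)"
  by (auto intro!: K0I FS_carrier simp: Csimps)

lemma rel4: "FS (FM (fa_gen (Vx (r e))) (fa_gen (Gh e))) (fa_gen (Gh e)) \<in> (K0 :: (_ \<Rightarrow> 'k::field) set)"
proof (intro K0I FS_carrier FM_gen_carrier fa_gen_carrier)
  fix p q :: "'e list" assume "valid p"
  then show "C (FS (FM (fa_gen (Vx (r e))) (fa_gen (Gh e))) (fa_gen (Gh e))) p q = (0::'k)"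
    by (cases p) (auto simp: Csimps)
qed

lemma rel5: "FS (FM (fa_gen (Gh e)) (fa_gen (Vx (s e)))) (fa_gen (Gh e)) \<in> (K0 :: (_ \<Rightarrow> 'k::field) set)"
proof (intro K0I FS_carrier FM_gen_carrier fa_gen_carrier)
  fix p q :: "'e list" assume "valid p"
  then show "C (FS (FM (fa_gen (Gh e)) (fa_gen (Vx (s e))))  (fa_gen (Gh e))) p q = (0::'k)"
    by (cases p) (auto simp: Csimps)
qed

lemma rel6a: "e \<noteq> e' \<Longrightarrow> FS (FM (fa_gen (Gh e)) (fa_gen (Ed e'))) FZ \<in> (K0 :: (_ \<Rightarrow> 'k::field) set)"
  by (auto intro!: K0I FS_carrier simp: Csimps)
lemma rel6b: "e \<in> E1 \<Longrightarrow> FS (FM (fa_gen (Gh e)) (fa_gen (Ed e))) (fa_gen (Vx (r e))) \<in> (K0 :: (_ \<Rightarrow> 'k::field) set)"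
  by (auto intro!: K0I FS_carrier simp: Csimps)

lemma rel7:
  assumes "v \<in> E0" "finite {e \<in> E1. s e = v}" "{e \<in> E1. s e = v} \<noteq> {}"
  shows "FS (fa_gen (Vx v)) (finsum free_alg (\<lambda>e. FM (fa_gen (Ed e)) (fa_gen (Gh e))) {e \<in> E1. s e = v})
          \<in> (K0 :: (_ \<Rightarrow> 'k::field) set)"
proof -
  let ?A = "{e \<in> E1. s e = v}"
  let ?F = "\<lambda>e. FM (fa_gen (Ed e)) (fa_gen (Gh e)) :: (_ \<Rightarrow> 'k)"
  have Fc: "?F ` ?A \<subseteq> carrier free_alg" by (auto simp: FM_gen_carrier)
  have sc: "finsum free_alg ?F ?A \<in> carrier free_alg"
    by (rule finsum_carrier[OF Fc])
  have vw: "v \<noteq> wk" using assms(3) sinkw by auto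
  show ?thesis
  proof (intro K0I FS_carrier fa_gen_carrier sc)
    fix p q :: "'e list" assume vp: "valid p"
    have "C (FS (fa_gen (Vx v)) (finsum free_alg ?F ?A)) p q
          = C (fa_gen (Vx v)) p q - (\<Sum>e\<in>?A. C (?F e) p q)"
      by (simp add: C_minus sc fa_gen_carrier C_finsum[OF assms(2) Fc])
    also have "\<dots> = 0"
    proof (cases p)
      case Nil
      then show ?thesis using vw by (simp add: Csimps)
    next
      case (Cons e0 p')
      have "(\<Sum>e\<in>?A. C (?F e) p q) = (\<Sum>e\<in>?A. if e = e0 then of_bool (q = p) else 0)"
        using vp Cons by (intro sum.cong) (auto simp: Csimps)
      also have "\<dots> = (if e0 \<in> ?A then of_bool (q = p) else 0)"
        using assms(2) by (simp add: sum.delta')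
      finally show ?thesis using vp Cons by (auto simp: Csimps)
    qed
    finally show "C (FS (fa_gen (Vx v)) (finsum free_alg ?F ?A)) p q = (0::'k)" .
  qed
qed

lemma rel8: "FS FO (finsum free_alg (\<lambda>v. fa_gen (Vx v)) E0) \<in> (K0 :: (_ \<Rightarrow> 'k::field) set)"
proof -
  let ?F = "\<lambda>v. fa_gen (Vx v) :: (_ \<Rightarrow> 'k)"
  have Fc: "?F ` E0 \<subseteq> carrier free_alg" by (auto simp: fa_gen_carrier)
  have sc: "finsum free_alg ?F E0 \<in> carrier free_alg"
    by (rule finsum_carrier[OF Fc])
  show ?thesis
  proof (intro K0I FS_carrier FO_carrier sc)
    fix p q :: "'e list" assume vp: "valid p"
    have "C (FS FO (finsum free_alg ?F E0)) p q = of_bool (p = q) - (\<Sum>v\<in>E0. of_bool (src p = v \<and> p = q))"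
      by (simp add: C_minus sc FO_carrier C_finsum[OF finE0 Fc] Csimps) (intro sum.cong, auto)
    also have "(\<Sum>v\<in>E0. of_bool (src p = v \<and> p = q)) = (\<Sum>v\<in>E0. if v = src p then (of_bool (p = q)::'k) else 0)"
      by (intro sum.cong) auto
    also have "\<dots> = of_bool (p = q)" using src_valid[OF vp] finE0 by (simp add: sum.delta')
    finally show "C (FS FO (finsum free_alg ?F E0)) p q = (0::'k)" by simp
  qed
qed

lemma rels_K0: "lpa_rels E0 E1 r s \<subseteq> (K0 :: (_ \<Rightarrow> 'k::field) set)"
  unfolding lpa_rels_def
  by (auto intro!: rel1a rel1b rel2 rel3 rel4 rel5 rel6a rel6b rel7 rel8)

lemma rels_carrier: "lpa_rels E0 E1 r s \<subseteq> (carrier free_alg :: (_ \<Rightarrow> 'k::field) set)"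
  using rels_K0 by (auto simp: K0_def)

lemma lpa_ideal_ideal: "ideal (lpa_ideal E0 E1 r s :: (_ \<Rightarrow> 'k::field) set) free_alg"
  unfolding lpa_ideal_def by (rule ring.genideal_ideal[OF fa_ring rels_carrier])

lemma lpa_ideal_K0: "lpa_ideal E0 E1 r s \<subseteq> (K0 :: (_ \<Rightarrow> 'k::field) set)"
  unfolding lpa_ideal_def by (rule ring.genideal_minimal[OF fa_ring K0_ideal rels_K0])

end


context lparep begin
lemma C_mult2:
  fixes x y :: "('v,'e) lpa_gen list \<Rightarrow> 'k::field"
  assumes x: "x \<in> carrier free_alg" and y: "y \<in> carrier free_alg" and fS: "finite S"
    and hS: "\<And>m. m \<notin> S \<Longrightarrow> C y p m = 0"
  shows "C (FM x y) p q = (\<Sum>m\<in>S. C x m q * C y p m)"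
proof -
  let ?R = "{m. \<exists>u. y u \<noteq> 0 \<and> wact u p = Some m}"
  have fR: "finite ?R"
  proof -
    have "?R \<subseteq> (\<lambda>u. the (wact u p)) ` {u. y u \<noteq> 0}" by force
    then show ?thesis using y by (auto simp: fa_carrier_iff intro: finite_subset)
  qed
  have "C (FM x y) p q = (\<Sum>m\<in>?R \<union> S. C x m q * C y p m)"
    by (rule C_mult') (use x y fS fR in auto)
  also have "\<dots> = (\<Sum>m\<in>S. C x m q * C y p m)"
    by (rule sum.mono_neutral_right) (use fS fR hS in auto)
  finally show ?thesis .
qed
end

locale lpamain = lpactx E0 E1 r s wk for E0 :: "'v set" and E1 :: "'e set" and r s :: "'e \<Rightarrow> 'v" and wk :: 'v +
  fixes f :: 'e and I :: "(('v,'e) lpa_gen list \<Rightarrow> 'k::field_char_0) set"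
  assumes fE1: "f \<in> E1" and rf: "r f = wk" and I_def: "I = lpa_ideal E0 E1 r s"
begin

abbreviation "L \<equiv> free_alg Quot I"
abbreviation "h \<equiv> a_r_coset free_alg I"

lemma I_ideal: "ideal I free_alg" unfolding I_def by (rule lpa_ideal_ideal)
lemma I_K0: "I \<subseteq> K0" unfolding I_def by (rule lpa_ideal_K0)
lemma L_ring: "ring L" by (rule ideal.quotient_is_ring[OF I_ideal])
lemma h_hom: "h \<in> ring_hom free_alg L" by (rule ideal.rcos_ring_hom[OF I_ideal])
lemma rels_I: "lpa_rels E0 E1 r s \<subseteq> I"
  unfolding I_def lpa_ideal_def by (rule ring.genideal_self[OF fa_ring rels_carrier])

lemma h_eq: assumes "x \<in> carrier free_alg" "y \<in> carrier free_alg" "FS x y \<in> I" shows "h x = h y"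
proof -
  interpret I: ideal I free_alg by (rule I_ideal)
  have "x \<in> I +>\<^bsub>free_alg\<^esub> y"
    using assms by (simp add: I.a_rcos_module_minus[OF fa_ring])
  then show ?thesis using I.a_repr_independence'[of x y] assms by simp
qed

lemma h_eqD: assumes "x \<in> carrier free_alg" "y \<in> carrier free_alg" "h x = h y" shows "FS x y \<in> I"
proof -
  interpret I: ideal I free_alg by (rule I_ideal)
  have "x \<in> I +>\<^bsub>free_alg\<^esub> x" by (rule I.a_rcos_self[OF assms(1)])
  then have "x \<in> I +>\<^bsub>free_alg\<^esub> y" using assms(3) by metis
  then show ?thesis using assms by (simp add: I.a_rcos_module_minus[OF fa_ring])
qed

lemma C_eq: assumes "x \<in> carrier free_alg" "y \<in> carrier free_alg" "h x = h y" "valid p"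
  shows "C x p q = C y p q"
proof -
  have "FS x y \<in> K0" using h_eqD[OF assms(1-3)] I_K0 by auto
  then have "C (FS x y) p q = 0" using assms(4) by (auto simp: K0_def)
  then show ?thesis using assms by (simp add: C_minus)
qed

end


lemma (in ring) sq0_unit_aux:
  assumes y: "y \<in> carrier R" and yy: "y \<otimes> y = \<zero>"
  shows "(\<one> \<oplus> y) \<otimes> (\<one> \<ominus> y) = \<one>" "(\<one> \<ominus> y) \<otimes> (\<one> \<oplus> y) = \<one>"
proof -
  have e1: "\<one> \<oplus> y \<oplus> \<ominus> y = \<one>" using y by (simp add: a_assoc r_neg)
  have e2: "\<one> \<oplus> \<ominus> y \<oplus> y = \<one>" using y by (simp add: a_assoc l_neg)
  show "(\<one> \<oplus> y) \<otimes> (\<one> \<ominus> y) = \<one>"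
    using y yy e1 by (simp add: minus_eq l_distr r_distr r_minus a_assoc[symmetric])
  show "(\<one> \<ominus> y) \<otimes> (\<one> \<oplus> y) = \<one>"
    using y yy e2 by (simp add: minus_eq l_distr r_distr l_minus a_assoc[symmetric])
qed

lemma (in ring) sq0_unit:
  assumes x: "x \<in> carrier R" and xx: "x \<otimes> x = \<zero>"
  shows "(\<one> \<oplus> (x \<oplus> x)) \<otimes> (\<one> \<ominus> (x \<oplus> x)) = \<one>" "(\<one> \<ominus> (x \<oplus> x)) \<otimes> (\<one> \<oplus> (x \<oplus> x)) = \<one>"
proof -
  have yy: "(x \<oplus> x) \<otimes> (x \<oplus> x) = \<zero>" using x xx by (simp add: l_distr r_distr)
  have y: "x \<oplus> x \<in> carrier R" using x by simp
  show "(\<one> \<oplus> (x \<oplus> x)) \<otimes> (\<one> \<ominus> (x \<oplus> x)) = \<one>" "(\<one> \<ominus> (x \<oplus> x)) \<otimes> (\<one> \<oplus> (x \<oplus> x)) = \<one>"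
    using sq0_unit_aux[OF y yy] by auto
qed

context lpamain begin

lemma mem_rel1: "v \<in> E0 \<Longrightarrow> v' \<in> E0 \<Longrightarrow> FS (FM (fa_gen (Vx v)) (fa_gen (Vx v'))) (if v = v' then fa_gen (Vx v) else FZ) \<in> (lpa_rels E0 E1 r s :: (_ \<Rightarrow> 'k) set)"
  unfolding lpa_rels_def by blast
lemma mem_rel2: "e \<in> E1 \<Longrightarrow> FS (FM (fa_gen (Vx (s e))) (fa_gen (Ed e))) (fa_gen (Ed e)) \<in> (lpa_rels E0 E1 r s :: (_ \<Rightarrow> 'k) set)"
  unfolding lpa_rels_def by blast
lemma mem_rel3: "e \<in> E1 \<Longrightarrow> FS (FM (fa_gen (Ed e)) (fa_gen (Vx (r e)))) (fa_gen (Ed e)) \<in> (lpa_rels E0 E1 r s :: (_ \<Rightarrow> 'k) set)"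
  unfolding lpa_rels_def by blast
lemma mem_rel4: "e \<in> E1 \<Longrightarrow> FS (FM (fa_gen (Vx (r e))) (fa_gen (Gh e))) (fa_gen (Gh e)) \<in> (lpa_rels E0 E1 r s :: (_ \<Rightarrow> 'k) set)"
  unfolding lpa_rels_def by blast
lemma mem_rel5: "e \<in> E1 \<Longrightarrow> FS (FM (fa_gen (Gh e)) (fa_gen (Vx (s e)))) (fa_gen (Gh e)) \<in> (lpa_rels E0 E1 r s :: (_ \<Rightarrow> 'k) set)"
  unfolding lpa_rels_def by blast

lemma rel_h: "FS u v \<in> lpa_rels E0 E1 r s \<Longrightarrow> u \<in> carrier free_alg \<Longrightarrow> v \<in> carrier free_alg \<Longrightarrow> h u = h v"
  using rels_I h_eq by blast

lemma sf_ne: "s f \<noteq> wk" using sinkw fE1 by auto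

lemma hM: "u \<in> carrier free_alg \<Longrightarrow> v \<in> carrier free_alg \<Longrightarrow> h (FM u v) = h u \<otimes>\<^bsub>L\<^esub> h v"
  using h_hom by (simp add: ring_hom_mult)
lemma hA: "u \<in> carrier free_alg \<Longrightarrow> v \<in> carrier free_alg \<Longrightarrow> h (FA u v) = h u \<oplus>\<^bsub>L\<^esub> h v"
  using h_hom by (simp add: ring_hom_add)
lemma hO: "h FO = \<one>\<^bsub>L\<^esub>"
  using h_hom by (simp add: ring_hom_one)
lemma hZ: "h FZ = \<zero>\<^bsub>L\<^esub>"
  using ring_hom_zero[OF h_hom fa_ring L_ring] .
lemma hS: "u \<in> carrier free_alg \<Longrightarrow> v \<in> carrier free_alg \<Longrightarrow> h (FS u v) = h u \<ominus>\<^bsub>L\<^esub> h v"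
proof -
  interpret H: ring_hom_ring free_alg L h by (rule ideal.rcos_ring_hom_ring[OF I_ideal])
  assume "u \<in> carrier free_alg" "v \<in> carrier free_alg"
  then show ?thesis by (simp add: a_minus_def)
qed
lemma hC: "u \<in> carrier free_alg \<Longrightarrow> h u \<in> carrier L"
  using h_hom by (simp add: ring_hom_closed)

lemma xa_sq: "h (fa_gen (Gh f)) \<otimes>\<^bsub>L\<^esub> h (fa_gen (Gh f)) = \<zero>\<^bsub>L\<^esub>"
proof -
  interpret L: ring L by (rule L_ring)
  let ?g = "h (fa_gen (Gh f))" and ?s = "h (fa_gen (Vx (s f)))" and ?w = "h (fa_gen (Vx wk))"
  have c: "?g \<in> carrier L" "?s \<in> carrier L" "?w \<in> carrier L" by (simp_all add: hC fa_gen_carrier)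
  have 1: "?g \<otimes>\<^bsub>L\<^esub> ?s = ?g"
    using rel_h[OF mem_rel5[OF fE1]] by (simp add: hM fa_gen_carrier FM_gen_carrier)
  have 2: "?w \<otimes>\<^bsub>L\<^esub> ?g = ?g"
    using rel_h[OF mem_rel4[OF fE1]] rf by (simp add: hM fa_gen_carrier FM_gen_carrier)
  have 3: "?s \<otimes>\<^bsub>L\<^esub> ?w = \<zero>\<^bsub>L\<^esub>"
  proof -
    have "s f \<in> E0" using gr fE1 by (auto simp: graph_def)
    then show ?thesis using rel_h[OF mem_rel1[of "s f" wk]] wE0 sf_ne by (simp add: hM hZ fa_gen_carrier FM_gen_carrier FZ_carrier)
  qed
  have "?g \<otimes>\<^bsub>L\<^esub> ?g = (?g \<otimes>\<^bsub>L\<^esub> ?s) \<otimes>\<^bsub>L\<^esub> (?w \<otimes>\<^bsub>L\<^esub> ?g)" using 1 2 by simp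
  also have "\<dots> = ?g \<otimes>\<^bsub>L\<^esub> ((?s \<otimes>\<^bsub>L\<^esub> ?w) \<otimes>\<^bsub>L\<^esub> ?g)" using c by (simp add: L.m_assoc)
  also have "\<dots> = \<zero>\<^bsub>L\<^esub>" using c 3 by simp
  finally show ?thesis .
qed

lemma xb_sq: "h (fa_gen (Ed f)) \<otimes>\<^bsub>L\<^esub> h (fa_gen (Ed f)) = \<zero>\<^bsub>L\<^esub>"
proof -
  interpret L: ring L by (rule L_ring)
  let ?g = "h (fa_gen (Ed f))" and ?s = "h (fa_gen (Vx (s f)))" and ?w = "h (fa_gen (Vx wk))"
  have c: "?g \<in> carrier L" "?s \<in> carrier L" "?w \<in> carrier L" by (simp_all add: hC fa_gen_carrier)
  have 1: "?s \<otimes>\<^bsub>L\<^esub> ?g = ?g"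
    using rel_h[OF mem_rel2[OF fE1]] by (simp add: hM fa_gen_carrier FM_gen_carrier)
  have 2: "?g \<otimes>\<^bsub>L\<^esub> ?w = ?g"
    using rel_h[OF mem_rel3[OF fE1]] rf by (simp add: hM fa_gen_carrier FM_gen_carrier)
  have 3: "?w \<otimes>\<^bsub>L\<^esub> ?s = \<zero>\<^bsub>L\<^esub>"
  proof -
    have "s f \<in> E0" using gr fE1 by (auto simp: graph_def)
    then show ?thesis using rel_h[OF mem_rel1[of wk "s f"]] wE0 sf_ne by (simp add: hM hZ fa_gen_carrier FM_gen_carrier FZ_carrier)
  qed
  have "?g \<otimes>\<^bsub>L\<^esub> ?g = (?g \<otimes>\<^bsub>L\<^esub> ?w) \<otimes>\<^bsub>L\<^esub> (?s \<otimes>\<^bsub>L\<^esub> ?g)" using 1 2 by simp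
  also have "\<dots> = ?g \<otimes>\<^bsub>L\<^esub> ((?w \<otimes>\<^bsub>L\<^esub> ?s) \<otimes>\<^bsub>L\<^esub> ?g)" using c by (simp add: L.m_assoc)
  also have "\<dots> = \<zero>\<^bsub>L\<^esub>" using c 3 by simp
  finally show ?thesis .
qed

end


fun pact :: "bool \<times> bool \<Rightarrow> int \<times> int \<Rightarrow> int \<times> int" where
  "pact (sg, True) (x, y) = (x + (if sg then 2 else -2) * y, y)"
| "pact (sg, False) (x, y) = (x, y + (if sg then 2 else -2) * x)"

fun sgok :: "bool \<Rightarrow> int \<Rightarrow> int \<Rightarrow> bool" where
  "sgok sg x y = (if sg then (x > 0 \<and> y > 0 \<or> x < 0 \<and> y < 0) else (x > 0 \<and> y < 0 \<or> x < 0 \<and> y > 0))"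

fun region :: "bool \<times> bool \<Rightarrow> int \<times> int \<Rightarrow> bool" where
  "region (sg, True) (x, y) = (\<bar>x\<bar> > \<bar>y\<bar> \<and> sgok sg x y)"
| "region (sg, False) (x, y) = (\<bar>y\<bar> > \<bar>x\<bar> \<and> sgok sg x y)"

fun pstart :: "bool \<times> bool \<Rightarrow> int \<times> int" where
  "pstart (sg, True) = (0, 1)" | "pstart (sg, False) = (1, 0)"

lemma region_step:
  assumes "region l' u" "\<not> (snd l' = snd l \<and> fst l' \<noteq> fst l)"
  shows "region l (pact l u)"
proof -
  obtain sg t where l: "l = (sg, t)" by (cases l)
  obtain sg' t' where l': "l' = (sg', t')" by (cases l')
  obtain x y where u: "u = (x, y)" by (cases u)
  show ?thesis using assms unfolding l l' u
    by (cases sg; cases t; cases sg'; cases t') (auto simp: abs_if split: if_splits)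
qed

lemma region_start: "region l (pact l (pstart l))"
  by (cases l rule: pstart.cases) auto

lemma pingpong:
  assumes "w \<noteq> []" "reduced_word w"
  shows "region (hd w) (foldr pact w (pstart (last w)))"
  using assms
proof (induction w)
  case Nil then show ?case by simp
next
  case (Cons l w')
  show ?case
  proof (cases "w' = []")
    case True then show ?thesis using region_start by simp
  next
    case False
    have red: "reduced_word w'" using Cons.prems(2) unfolding reduced_word_def
      by (metis Suc_mono length_Cons nth_Cons_Suc)
    have nr: "\<not> (snd (hd w') = snd l \<and> fst (hd w') \<noteq> fst l)"
      using Cons.prems(2) False unfolding reduced_word_def
      by (metis Suc_less_eq length_Cons length_greater_0_conv hd_conv_nth nth_Cons_0 nth_Cons_Suc)
    have "region (hd w') (foldr pact w' (pstart (last w')))" using Cons.IH[OF False red] .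
    then show ?thesis using region_step[OF _ nr] False by simp
  qed
qed

lemma pingpong_ne:
  assumes "w \<noteq> []" "reduced_word w"
  shows "foldr pact w (pstart (last w)) \<noteq> pstart (last w)"
proof
  assume e: "foldr pact w (pstart (last w)) = pstart (last w)"
  have "region (hd w) (pstart (last w))" using pingpong[OF assms] e by simp
  moreover obtain sg t where "hd w = (sg, t)" by (cases "hd w")
  moreover obtain sg' t' where "last w = (sg', t')" by (cases "last w")
  ultimately show False by (cases t; cases t'; cases sg) auto
qed



context lpamain begin

definition lett :: "bool \<times> bool \<Rightarrow> (('v,'e) lpa_gen list \<Rightarrow> 'k)" where
  "lett l = (case l of (sg, t) \<Rightarrow>
     (let g = fa_gen (if t then Gh f else Ed f) in if sg then FA FO (FA g g) else FS FO (FA g g)))"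

fun Pw :: "(bool \<times> bool) list \<Rightarrow> (('v,'e) lpa_gen list \<Rightarrow> 'k)" where
  "Pw [] = FO" | "Pw (l # w) = FM (lett l) (Pw w)"

fun st :: "bool \<Rightarrow> 'e list" where "st False = []" | "st True = [f]"

fun comp :: "bool \<Rightarrow> int \<times> int \<Rightarrow> int" where "comp False u = fst u" | "comp True u = snd u"

lemma FA_carrier: "a \<in> carrier free_alg \<Longrightarrow> b \<in> carrier free_alg \<Longrightarrow> FA a b \<in> carrier free_alg"
  by (simp add: fa_simps fa_carrier_iff fa_add_closed)

lemma lett_carrier: "lett l \<in> carrier free_alg"
  by (auto simp: lett_def Let_def FA_carrier FS_carrier FO_carrier fa_gen_carrier split: prod.splits)

lemma Pw_carrier: "Pw w \<in> carrier free_alg"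
  by (induction w) (auto simp: FO_carrier lett_carrier FM_carrier)

lemma valid_f: "valid [f]" using fE1 rf by simp

lemma rf_ne_sf: "r f \<noteq> s f" using rf sf_ne by auto

lemma gact_f: "gact (Gh f) [] = None" "gact (Gh f) [f] = Some []"
  "gact (Ed f) [] = Some [f]" "gact (Ed f) [f] = None"
  using fE1 rf sf_ne by auto

lemma sf_ne': "wk \<noteq> s f" using sf_ne by auto

lemma C_dbl: "C (FA (fa_gen x) (fa_gen x)) p q = 2 * (of_bool (gact x p = Some q) :: 'k)"
  by (simp add: C_add' C_gen fa_gen_carrier)

lemma C_lett:
  "C (lett (sg, t)) p q =
     of_bool (p = q) + (if sg then 2 else -2) * of_bool (gact (if t then Gh f else Ed f) p = Some q)"
proof -
  define x :: "('v,'e) lpa_gen" where "x = (if t then Gh f else Ed f)"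
  have ga: "FA (fa_gen x) (fa_gen x) \<in> (carrier free_alg :: (_ \<Rightarrow> 'k) set)"
    by (intro FA_carrier fa_gen_carrier)
  have l: "lett (sg, t) = (if sg then FA FO (FA (fa_gen x) (fa_gen x)) else FS FO (FA (fa_gen x) (fa_gen x)))"
    by (simp add: lett_def Let_def x_def)
  show ?thesis unfolding x_def[symmetric] l
    by (cases sg) (simp_all add: C_add' C_minus C_FO FO_carrier ga C_dbl)
qed

lemma lett_inv: "p \<in> {[], [f]} \<Longrightarrow> q \<notin> {[], [f]} \<Longrightarrow> C (lett l) p q = 0"
proof -
  assume "p \<in> {[], [f]}" "q \<notin> {[], [f]}"
  then show ?thesis using fE1 rf_ne_sf sf_ne by (cases l) (auto simp: C_lett gact_f)
qed

lemma C_lett_vals: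
  "C (lett (sg, t)) [] [] = 1" "C (lett (sg, t)) [f] [f] = 1"
  "C (lett (sg, True)) [] [f] = 0" "C (lett (sg, True)) [f] [] = (if sg then 2 else -2)"
  "C (lett (sg, False)) [] [f] = (if sg then 2 else -2)" "C (lett (sg, False)) [f] [] = 0"
  by (simp_all only: C_lett gact_f if_True if_False) simp_all

lemma lett_vec:
  "of_int (fst u) * C (lett l) [] (st j) + of_int (snd u) * C (lett l) [f] (st j)
     = (of_int (comp j (pact l u)) :: 'k)"
proof -
  obtain sg t where l: "l = (sg, t)" by (cases l)
  obtain x y where u: "u = (x, y)" by (cases u)
  show ?thesis unfolding l u
    by (cases t; cases j) (simp_all add: C_lett_vals algebra_simps)
qed

lemma Pw_props:
  "(\<forall>p q. p \<in> {[], [f]} \<longrightarrow> q \<notin> {[], [f]} \<longrightarrow> C (Pw w) p q = 0) \<and>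
   (\<forall>u j. of_int (fst u) * C (Pw w) [] (st j) + of_int (snd u) * C (Pw w) [f] (st j)
           = (of_int (comp j (foldr pact w u)) :: 'k))"
proof (induction w)
  case Nil
  show ?case
  proof (intro conjI allI impI)
    fix u j show "of_int (fst u) * C (Pw []) [] (st j) + of_int (snd u) * C (Pw []) [f] (st j)
           = (of_int (comp j (foldr pact [] u)) :: 'k)"
      by (cases j) (auto simp: C_FO)
  qed (auto simp: C_FO)
next
  case (Cons l w)
  have Cm: "C (Pw (l # w)) p q = C (lett l) [] q * C (Pw w) p [] + C (lett l) [f] q * C (Pw w) p [f]"
    if "p \<in> {[], [f]}" for p q
  proof -
    have "C (Pw (l # w)) p q = (\<Sum>m\<in>{[], [f]}. C (lett l) m q * C (Pw w) p m)"
      unfolding Pw.simps by (rule C_mult2[OF lett_carrier Pw_carrier]) (use Cons.IH that in auto)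
    then show ?thesis by simp
  qed
  show ?case
  proof (intro conjI allI impI)
    fix p q assume "p \<in> {[], [f]}" "q \<notin> {[], [f]}"
    then show "C (Pw (l # w)) p q = 0" using Cm[of p q] lett_inv[of _ q l] by auto
  next
    fix u j
    let ?u' = "foldr pact w u"
    have ih: "\<And>j. of_int (fst u) * C (Pw w) [] (st j) + of_int (snd u) * C (Pw w) [f] (st j)
           = (of_int (comp j ?u') :: 'k)" using Cons.IH by blast
    have e0: "fst ?u' = comp False ?u'" "snd ?u' = comp True ?u'" by simp_all
    have "of_int (fst u) * C (Pw (l # w)) [] (st j) + of_int (snd u) * C (Pw (l # w)) [f] (st j)
        = C (lett l) [] (st j) * (of_int (fst u) * C (Pw w) [] (st False) + of_int (snd u) * C (Pw w) [f] (st False))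
        + C (lett l) [f] (st j) * (of_int (fst u) * C (Pw w) [] (st True) + of_int (snd u) * C (Pw w) [f] (st True))"
    proof -
      have c1: "C (Pw (l # w)) [] (st j) = C (lett l) [] (st j) * C (Pw w) [] [] + C (lett l) [f] (st j) * C (Pw w) [] [f]"
        by (rule Cm) simp
      have c2: "C (Pw (l # w)) [f] (st j) = C (lett l) [] (st j) * C (Pw w) [f] [] + C (lett l) [f] (st j) * C (Pw w) [f] [f]"
        by (rule Cm) simp
      show ?thesis unfolding c1 c2 by (simp add: algebra_simps)
    qed
    also have "\<dots> = C (lett l) [] (st j) * of_int (fst ?u') + C (lett l) [f] (st j) * of_int (snd ?u')"
      by (simp only: ih e0)
    also have "\<dots> = of_int (comp j (pact l ?u'))"
      using lett_vec[of ?u' l j] by (simp add: mult.commute)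
    finally show "of_int (fst u) * C (Pw (l # w)) [] (st j) + of_int (snd u) * C (Pw (l # w)) [f] (st j)
           = (of_int (comp j (foldr pact (l # w) u)) :: 'k)" by simp
  qed
qed

lemma Pw_nontriv:
  assumes "w \<noteq> []" "reduced_word w"
  shows "h (Pw w) \<noteq> h FO"
proof
  assume eq: "h (Pw w) = h FO"
  let ?v = "pstart (last w)"
  have Ceq: "C (Pw w) p q = C FO p q" if "p \<in> {[], [f]}" for p q
  proof -
    have "valid p"
    proof -
      from that have "p = [] \<or> p = [f]" by simp
      then show ?thesis
      proof
        assume "p = []" then show ?thesis by (simp only: valid.simps(1))
      next
        assume "p = [f]" then show ?thesis by (simp only: valid_f)
      qed
    qed
    then show ?thesis using C_eq[OF Pw_carrier FO_carrier eq] by blast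
  qed
  have "(of_int (comp j (foldr pact w ?v)) :: 'k) = of_int (comp j ?v)" for j
  proof -
    have "(of_int (comp j (foldr pact w ?v)) :: 'k)
        = of_int (fst ?v) * C (Pw w) [] (st j) + of_int (snd ?v) * C (Pw w) [f] (st j)"
      using Pw_props[of w] by simp
    also have "\<dots> = of_int (fst ?v) * C FO [] (st j) + of_int (snd ?v) * C FO [f] (st j)"
      by (simp add: Ceq)
    also have "\<dots> = of_int (comp j ?v)" by (cases j) (auto simp: C_FO)
    finally show ?thesis .
  qed
  then have "comp j (foldr pact w ?v) = comp j ?v" for j by simp
  from this[of False] this[of True] have "foldr pact w ?v = ?v" by (simp add: prod_eq_iff)
  then show False using pingpong_ne[OF assms] by simp
qed

end


context lpamain begin

abbreviation "hl c \<equiv> h (lett c)"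

lemma hl_form: "hl (sg, t) = (if sg then \<one>\<^bsub>L\<^esub> \<oplus>\<^bsub>L\<^esub> (h (fa_gen (if t then Gh f else Ed f)) \<oplus>\<^bsub>L\<^esub> h (fa_gen (if t then Gh f else Ed f)))
    else \<one>\<^bsub>L\<^esub> \<ominus>\<^bsub>L\<^esub> (h (fa_gen (if t then Gh f else Ed f)) \<oplus>\<^bsub>L\<^esub> h (fa_gen (if t then Gh f else Ed f))))"
  by (cases sg) (simp_all add: lett_def Let_def hA hS hO FA_carrier FO_carrier fa_gen_carrier)

lemma hl_inv: "hl (sg, t) \<otimes>\<^bsub>L\<^esub> hl (\<not> sg, t) = \<one>\<^bsub>L\<^esub>"
proof -
  interpret L: ring L by (rule L_ring)
  let ?x = "h (fa_gen (if t then Gh f else Ed f))"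
  have xc: "?x \<in> carrier L" by (simp add: hC fa_gen_carrier)
  have xx: "?x \<otimes>\<^bsub>L\<^esub> ?x = \<zero>\<^bsub>L\<^esub>" using xa_sq xb_sq by (cases t) simp_all
  show ?thesis unfolding hl_form using L.sq0_unit[OF xc xx] by (cases sg) simp_all
qed

lemma hl_carrier: "hl c \<in> carrier L" by (simp add: hC lett_carrier)

lemma hl_Units: "hl (sg, t) \<in> Units L"
  unfolding Units_def using hl_inv[of sg t] hl_inv[of "\<not> sg" t] hl_carrier by auto

abbreviation "U \<equiv> units_of L"

lemma U_group: "group U" by (rule monoid.units_group[OF ring.is_monoid[OF L_ring]])

lemma hl_invU: "inv\<^bsub>U\<^esub> (hl (sg, t)) = hl (\<not> sg, t)"
  by (rule group.inv_equality[OF U_group])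
     (use hl_inv[of "\<not> sg" t] hl_Units in \<open>simp_all add: units_of_carrier units_of_mult units_of_one\<close>)

abbreviation "aa \<equiv> hl (True, True)"
abbreviation "bb \<equiv> hl (True, False)"
abbreviation "GG \<equiv> subgroup_generated U {aa, bb}"

lemma ab_U: "{aa, bb} \<subseteq> carrier U" using hl_Units by (auto simp: units_of_carrier)

lemma ab_GG: "{aa, bb} \<subseteq> carrier GG"
  using ab_U by (auto simp: carrier_subgroup_generated intro: generate.incl)

lemma GG_group: "group GG" by (rule group.group_subgroup_generated[OF U_group])

definition code :: "bool \<times> ((('v,'e) lpa_gen list \<Rightarrow> 'k) set) \<Rightarrow> bool \<times> bool" where
  "code l = (fst l, snd l = aa)"

lemma letter_eval:
  assumes "x \<in> {aa, bb}"
  shows "(if sg then x else inv\<^bsub>GG\<^esub> x) = hl (code (sg, x))"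
proof -
  have xG: "x \<in> carrier GG" using assms ab_GG by auto
  have xa: "x = hl (True, x = aa)"
  proof (cases "x = aa")
    case True then show ?thesis by simp
  next
    case False then have "x = bb" using assms by auto
    then show ?thesis using False by simp
  qed
  have "inv\<^bsub>GG\<^esub> x = inv\<^bsub>U\<^esub> x" using group.inv_subgroup_generated[OF U_group xG] .
  also have "\<dots> = hl (False, x = aa)" by (subst xa) (simp add: hl_invU)
  finally show ?thesis using xa by (cases sg) (simp_all add: code_def)
qed

lemma word_eval_GG:
  assumes "set (map snd w) \<subseteq> {aa, bb}"
  shows "word_eval GG w = h (Pw (map code w))"
  using assms
proof (induction w)
  case Nil
  then show ?case by (simp add: word_eval_def hO units_of_one)
next
  case (Cons l w)
  obtain sg x where l: "l = (sg, x)" by (cases l)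
  have x: "x \<in> {aa, bb}" using Cons.prems l by auto
  have "word_eval GG (l # w) = (if sg then x else inv\<^bsub>GG\<^esub> x) \<otimes>\<^bsub>L\<^esub> word_eval GG w"
    by (simp add: word_eval_def l units_of_mult)
  also have "\<dots> = hl (code l) \<otimes>\<^bsub>L\<^esub> h (Pw (map code w))"
    using letter_eval[OF x] Cons l by simp
  also have "\<dots> = h (Pw (map code (l # w)))"
    by (simp add: hM lett_carrier Pw_carrier)
  finally show ?case .
qed

lemma reduced_code:
  assumes "reduced_word w" "set (map snd w) \<subseteq> {aa, bb}"
  shows "reduced_word (map code w)"
  unfolding reduced_word_def
proof (intro allI impI)
  fix i assume i: "Suc i < length (map code w)"
  then have m: "snd (w ! i) \<in> {aa, bb}" "snd (w ! Suc i) \<in> {aa, bb}"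
    using assms(2) by (auto simp: nth_mem subset_iff)
  have "\<not> (snd (w ! i) = snd (w ! Suc i) \<and> fst (w ! i) \<noteq> fst (w ! Suc i))"
    using assms(1) i unfolding reduced_word_def by auto
  then show "\<not> (snd (map code w ! i) = snd (map code w ! Suc i) \<and> fst (map code w ! i) \<noteq> fst (map code w ! Suc i))"
    using i m by (auto simp: code_def)
qed

lemma free_basis_GG: "free_basis GG {aa, bb}"
  unfolding free_basis_def
proof (intro conjI allI impI)
  show "{aa, bb} \<subseteq> carrier GG" by (rule ab_GG)
  show "generate GG {aa, bb} = carrier GG"
  proof -
    have "carrier (subgroup_generated GG {aa, bb}) = carrier GG"
      using group.subgroup_generated2[OF U_group] by simp
    then show ?thesis using ab_GG by (simp add: carrier_subgroup_generated Int_absorb1)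
  qed
  fix w assume w: "w \<noteq> [] \<and> set (map snd w) \<subseteq> {aa, bb} \<and> reduced_word w"
  have "h (Pw (map code w)) \<noteq> h FO"
    by (rule Pw_nontriv) (use w reduced_code in auto)
  then show "word_eval GG w \<noteq> \<one>\<^bsub>GG\<^esub>"
    using word_eval_GG w by (simp add: hO units_of_one)
qed

lemma ab_ne: "aa \<noteq> bb"
proof
  assume "aa = bb"
  then have "C (lett (True, True)) [] [f] = C (lett (True, False)) [] [f]"
    by (intro C_eq lett_carrier) auto
  then show False by (simp add: C_lett_vals)
qed

lemma not_cyclic_GG: "\<not> cyclic_group GG"
proof
  assume cyc: "cyclic_group GG"
  interpret G: comm_group GG using group.cyclic_imp_abelian_group[OF GG_group cyc] .
  let ?w = "[(True, aa), (True, bb), (False, aa), (False, bb)]"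
  have ac: "aa \<in> carrier GG" "bb \<in> carrier GG" using ab_GG by auto
  have "word_eval GG ?w = aa \<otimes>\<^bsub>GG\<^esub> (bb \<otimes>\<^bsub>GG\<^esub> (inv\<^bsub>GG\<^esub> aa \<otimes>\<^bsub>GG\<^esub> (inv\<^bsub>GG\<^esub> bb \<otimes>\<^bsub>GG\<^esub> \<one>\<^bsub>GG\<^esub>)))"
    by (simp add: word_eval_def)
  also have "\<dots> = aa \<otimes>\<^bsub>GG\<^esub> (bb \<otimes>\<^bsub>GG\<^esub> (inv\<^bsub>GG\<^esub> aa \<otimes>\<^bsub>GG\<^esub> inv\<^bsub>GG\<^esub> bb))"
    using ac by (simp only: G.r_one G.inv_closed)
  also have "\<dots> = bb \<otimes>\<^bsub>GG\<^esub> (aa \<otimes>\<^bsub>GG\<^esub> (inv\<^bsub>GG\<^esub> aa \<otimes>\<^bsub>GG\<^esub> inv\<^bsub>GG\<^esub> bb))"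
    using ac by (intro G.m_lcomm) (simp_all only: G.m_closed G.inv_closed)
  also have "\<dots> = bb \<otimes>\<^bsub>GG\<^esub> ((aa \<otimes>\<^bsub>GG\<^esub> inv\<^bsub>GG\<^esub> aa) \<otimes>\<^bsub>GG\<^esub> inv\<^bsub>GG\<^esub> bb)"
    using ac by (simp only: G.m_assoc G.inv_closed)
  also have "\<dots> = \<one>\<^bsub>GG\<^esub>"
    using ac by (simp only: G.r_inv G.l_one G.inv_closed)
  finally have e: "word_eval GG ?w = \<one>\<^bsub>GG\<^esub>" .
  have "reduced_word ?w" using ab_ne
    by (auto simp: reduced_word_def less_Suc_eq nth_Cons')
  then show False using free_basis_GG e unfolding free_basis_def by auto
qed

end


theorem lemma4p3:
  fixes E0 :: "'v set" and E1 :: "'e set" and r s :: "'e \<Rightarrow> 'v"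
    and w :: 'v and f :: 'e
  assumes "graph E0 E1 r s"
    and "finite E0"
    and "sink E0 E1 s w"
    and "f \<in> E1" and "r f = w"
  defines "L \<equiv> (LPA E0 E1 r s :: ((('v,'e) lpa_gen) list \<Rightarrow> 'k::field_char_0) set ring)"
  defines "a \<equiv> \<one>\<^bsub>L\<^esub> \<oplus>\<^bsub>L\<^esub> (lpa_cls E0 E1 r s (Gh f) \<oplus>\<^bsub>L\<^esub> lpa_cls E0 E1 r s (Gh f))"
  defines "b \<equiv> \<one>\<^bsub>L\<^esub> \<oplus>\<^bsub>L\<^esub> (lpa_cls E0 E1 r s (Ed f) \<oplus>\<^bsub>L\<^esub> lpa_cls E0 E1 r s (Ed f))"
  shows "a \<in> Units L \<and> b \<in> Units L \<and>
         free_group (subgroup_generated (units_of L) {a, b}) \<and>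
         \<not> cyclic_group (subgroup_generated (units_of L) {a, b})"
proof -
  interpret M: lpamain E0 E1 r s w f "lpa_ideal E0 E1 r s :: (('v,'e) lpa_gen list \<Rightarrow> 'k) set"
    using assms(1-5) by unfold_locales (auto simp: sink_def)
  have L: "L = M.L" by (simp add: L_def LPA_def)
  have a: "a = M.aa" unfolding M.hl_form a_def L by (simp add: lpa_cls_def)
  have b: "b = M.bb" unfolding M.hl_form b_def L by (simp add: lpa_cls_def)
  show ?thesis unfolding L a b
    using M.hl_Units M.GG_group M.free_basis_GG M.not_cyclic_GG
    by (auto simp: free_group_def)
qed


end
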